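(* Consider a vanilla fully connected ReLU network with intermediate outputs $y^l=\sqrt2\,\phi\big(\frac{1}{\sqrt{n_{l-1}}}W^ly^{l-1}\big)$ for $l=1,\dots,L$, where $y^0\in\mathbb{R}^{n_0}$ is the (deterministic) input and the weight matrices $W^l\in\mathbb{R}^{n_l\times n_{l-1}}$ have i.i.d. standard normal entries, independent across layers. Then for each $l\in[L]$, $$\mathbb{E}\big[\|y^l\|_2^2\big]=\frac{n_l}{n_{l-1}}\mathbb{E}\big[\|y^{l-1}\|_2^2\big],\qquad \mathbb{E}\big[\|y^l\|_2^4\big]=\frac{n_l(n_l+5)}{n_{l-1}^2}\mathbb{E}\big[\|y^{l-1}\|_2^4\big].$$
   Context: $\phi(t)=\max(0,t)$ applied coordinatewise; $\|\cdot\|_2$ is the Euclidean norm. *)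

theory Defs
  imports "HOL-Probability.Probability"
begin

definition relu :: "real \<Rightarrow> real" where
  "relu t = max 0 t"

text \<open>Euclidean norm of a vector in R^k, represented as a function nat => real
  whose coordinates 0..k-1 are relevant.\<close>
definition vnorm :: "nat \<Rightarrow> (nat \<Rightarrow> real) \<Rightarrow> real" where
  "vnorm k v = sqrt (\<Sum>i<k. (v i)^2)"

text \<open>Intermediate outputs of the vanilla ReLU network: widths n, weights
  W l i j (layer l, row i < n l, column j < n (l-1)), input x = y^0.\<close>
fun relu_net :: "(nat \<Rightarrow> nat) \<Rightarrow> (nat \<Rightarrow> nat \<Rightarrow> nat \<Rightarrow> real) \<Rightarrow> (nat \<Rightarrow> real) \<Rightarrow> nat \<Rightarrow> nat \<Rightarrow> real" where
  "relu_net n W x 0 = x"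
| "relu_net n W x (Suc l) =
     (\<lambda>i. sqrt 2 * relu ((1 / sqrt (real (n l))) * (\<Sum>j<n l. W (Suc l) i j * relu_net n W x l j)))"

end

theory Submission
  imports Defs
begin

lemma relu_nonneg: "0 \<le> relu t" by (simp add: relu_def)

lemma borel_relu[measurable]: "relu \<in> borel_measurable borel"
  unfolding relu_def[abs_def] by measurable

lemma component_meas_any:
  "(\<lambda>w. w t) \<in> borel_measurable (PiM S (\<lambda>_. (borel :: real measure)))"
proof (cases "t \<in> S")
  case True then show ?thesis by measurable
next
  case False
  have "(\<lambda>w. undefined) \<in> borel_measurable (PiM S (\<lambda>_. (borel :: real measure)))" by simp
  then show ?thesis
    by (rule measurable_cong[THEN iffD1, rotated]) (use False in \<open>auto simp: space_PiM PiE_def extensional_def\<close>)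
qed

lemma relu_net_meas:
  "(\<lambda>w. relu_net n (\<lambda>k i j. w (k, i, j)) x lev i) \<in> borel_measurable (PiM S (\<lambda>_. (borel :: real measure)))"
proof (induction lev arbitrary: i)
  case 0 then show ?case by simp
next
  case (Suc lev)
  have c: "(\<lambda>w. w (Suc lev, i, j)) \<in> borel_measurable (PiM S (\<lambda>_. (borel :: real measure)))" for j
    by (rule component_meas_any)
  note Suc.IH[measurable] c[measurable]
  show ?case by simp
qed

lemma relu_net_agree:
  assumes "\<forall>k\<in>{1..lev}. \<forall>i<n k. \<forall>j<n (k - 1). W k i j = W' k i j" "i < n lev"
  shows "relu_net n W x lev i = relu_net n W' x lev i"
  using assms
proof (induction lev arbitrary: i)
  case 0 then show ?case by simp
next
  case (Suc lev)
  have IH: "relu_net n W x lev j = relu_net n W' x lev j" if "j < n lev" for j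
    using Suc.IH[of j] Suc.prems that by auto
  have "W (Suc lev) i j = W' (Suc lev) i j" if "j < n lev" for j
    using Suc.prems that by auto
  then have "(\<Sum>j<n lev. W (Suc lev) i j * relu_net n W x lev j) = (\<Sum>j<n lev. W' (Suc lev) i j * relu_net n W' x lev j)"
    using IH by (intro sum.cong) auto
  then show ?case by simp
qed

lemma (in prob_space) indep_tonelli:
  assumes ind: "indep_var S X T Y"
    and f: "f \<in> borel_measurable (S \<Otimes>\<^sub>M T)"
  shows "(\<integral>\<^sup>+\<omega>. f (X \<omega>, Y \<omega>) \<partial>M) = (\<integral>\<^sup>+s. (\<integral>\<^sup>+\<omega>. f (s, Y \<omega>) \<partial>M) \<partial>distr M S X)"
proof -
  have rv: "random_variable S X" "random_variable T Y"
    and eq: "distr M S X \<Otimes>\<^sub>M distr M T Y = distr M (S \<Otimes>\<^sub>M T) (\<lambda>x. (X x, Y x))"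
    using ind[unfolded indep_var_distribution_eq] by auto
  interpret PX: prob_space "distr M S X" using rv(1) by (rule prob_space_distr)
  interpret PY: prob_space "distr M T Y" using rv(2) by (rule prob_space_distr)
  interpret PP: pair_sigma_finite "distr M S X" "distr M T Y" ..
  have "(\<integral>\<^sup>+\<omega>. f (X \<omega>, Y \<omega>) \<partial>M) = (\<integral>\<^sup>+z. f z \<partial>distr M (S \<Otimes>\<^sub>M T) (\<lambda>x. (X x, Y x)))"
    using rv f by (subst nn_integral_distr) auto
  also have "\<dots> = (\<integral>\<^sup>+z. f z \<partial>(distr M S X \<Otimes>\<^sub>M distr M T Y))" by (simp add: eq)
  also have "\<dots> = (\<integral>\<^sup>+s. \<integral>\<^sup>+t. f (s, t) \<partial>distr M T Y \<partial>distr M S X)"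
    using f by (subst PY.nn_integral_fst[symmetric]) auto
  also have "\<dots> = (\<integral>\<^sup>+s. (\<integral>\<^sup>+\<omega>. f (s, Y \<omega>) \<partial>M) \<partial>distr M S X)"
  proof (rule nn_integral_cong)
    fix s assume "s \<in> space (distr M S X)"
    then have "s \<in> space S" by simp
    then show "(\<integral>\<^sup>+t. f (s, t) \<partial>distr M T Y) = (\<integral>\<^sup>+\<omega>. f (s, Y \<omega>) \<partial>M)"
      using rv f by (subst nn_integral_distr) auto
  qed
  finally show ?thesis .
qed

lemma relu_moment_half:
  assumes "0 < \<sigma>" "0 < q"
  shows "(\<integral>\<^sup>+x. ennreal (normal_density 0 \<sigma> x * relu x ^ (2*q)) \<partial>lborel)
         = ennreal (fact (2 * q) / ((2 / \<sigma>\<^sup>2)^q * fact q) / 2)"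
proof -
  define V :: real where "V = fact (2 * q) / ((2 / \<sigma>\<^sup>2)^q * fact q)"
  define f where "f x = normal_density 0 \<sigma> x * relu x ^ (2*q)" for x
  define g where "g x = normal_density 0 \<sigma> x * relu (-x) ^ (2*q)" for x
  have fm[measurable]: "f \<in> borel_measurable borel" unfolding f_def[abs_def] by measurable
  have gm[measurable]: "g \<in> borel_measurable borel" unfolding g_def[abs_def] by measurable
  have f0: "0 \<le> f x" for x unfolding f_def by (simp add: relu_nonneg)
  have g0: "0 \<le> g x" for x unfolding g_def by (simp add: relu_nonneg)
  have gf: "g x = f (- x)" for x unfolding f_def g_def normal_density_def by simp
  have "(\<integral>\<^sup>+x. ennreal (g x) \<partial>lborel) = (\<integral>\<^sup>+x. ennreal (f (- x)) \<partial>lborel)" by (simp add: gf)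
  also have "\<dots> = (\<integral>\<^sup>+x. ennreal (f x) \<partial>distr lborel borel uminus)"
    by (subst nn_integral_distr) auto
  also have "\<dots> = (\<integral>\<^sup>+x. ennreal (f x) \<partial>lborel)" by (simp add: lborel_distr_uminus)
  finally have eqfg: "(\<integral>\<^sup>+x. ennreal (g x) \<partial>lborel) = (\<integral>\<^sup>+x. ennreal (f x) \<partial>lborel)" .
  have fg: "f x + g x = normal_density 0 \<sigma> x * x ^ (2*q)" for x
  proof (cases "0 \<le> x")
    case True then show ?thesis using assms(2) unfolding f_def g_def relu_def by (simp add: max_def)
  next
    case False
    have "(- x) ^ (2*q) = x ^ (2*q)" by (simp add: power_mult)
    then show ?thesis using False assms(2) unfolding f_def g_def relu_def by (simp add: max_def)
  qed
  have hb: "has_bochner_integral lborel (\<lambda>x. normal_density 0 \<sigma> x * x ^ (2*q)) V"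
    using normal_moment_even[OF assms(1), of 0 q] unfolding V_def by simp
  have "(\<integral>\<^sup>+x. ennreal (f x) \<partial>lborel) + (\<integral>\<^sup>+x. ennreal (g x) \<partial>lborel)
        = (\<integral>\<^sup>+x. ennreal (f x + g x) \<partial>lborel)"
    using f0 g0 by (subst nn_integral_add[symmetric]) (auto intro!: nn_integral_cong simp: ennreal_plus)
  also have "\<dots> = ennreal V"
    unfolding fg using hb
    by (subst nn_integral_eq_integral) (auto simp: has_bochner_integral_iff intro!: mult_nonneg_nonneg)
  finally have sum: "(\<integral>\<^sup>+x. ennreal (f x) \<partial>lborel) + (\<integral>\<^sup>+x. ennreal (f x) \<partial>lborel) = ennreal V"
    by (simp add: eqfg)
  then have fin: "(\<integral>\<^sup>+x. ennreal (f x) \<partial>lborel) \<noteq> \<top>" by (metis ennreal_neq_top ennreal_add_eq_top)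
  then obtain r where r: "(\<integral>\<^sup>+x. ennreal (f x) \<partial>lborel) = ennreal r" "0 \<le> r"
    by (metis enn2real_nonneg ennreal_enn2real_if)
  have V0: "0 \<le> V" unfolding V_def by simp
  from sum r have "ennreal (r + r) = ennreal V" by (simp add: ennreal_plus[symmetric])
  then have "r + r = V" using r V0 by simp
  then have "r = V / 2" by simp
  then show ?thesis using r unfolding f_def V_def by simp
qed

lemma (in prob_space) relu_moment_distr:
  assumes "0 < \<sigma>" "distributed M lborel Z (normal_density 0 \<sigma>)" "0 < q"
  shows "(\<integral>\<^sup>+\<omega>. ennreal (relu (Z \<omega>) ^ (2*q)) \<partial>M)
         = ennreal (fact (2 * q) / ((2 / \<sigma>\<^sup>2)^q * fact q) / 2)"
proof -
  have "(\<integral>\<^sup>+\<omega>. ennreal (relu (Z \<omega>) ^ (2*q)) \<partial>M)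
     = (\<integral>\<^sup>+x. ennreal (normal_density 0 \<sigma> x) * ennreal (relu x ^ (2*q)) \<partial>lborel)"
    using assms(2) by (subst distributed_nn_integral[symmetric]) auto
  also have "\<dots> = (\<integral>\<^sup>+x. ennreal (normal_density 0 \<sigma> x * relu x ^ (2*q)) \<partial>lborel)"
    by (simp add: ennreal_mult'[symmetric] relu_nonneg)
  finally show ?thesis using relu_moment_half[OF assms(1,3)] by simp
qed

lemma (in prob_space) relu_moment2:
  assumes "0 < \<sigma>" "distributed M lborel Z (normal_density 0 \<sigma>)"
  shows "(\<integral>\<^sup>+\<omega>. ennreal (relu (Z \<omega>) ^ 2) \<partial>M) = ennreal (\<sigma>\<^sup>2 / 2)"
  using relu_moment_distr[OF assms, of 1] by simp

lemma (in prob_space) relu_moment4: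
  assumes "0 < \<sigma>" "distributed M lborel Z (normal_density 0 \<sigma>)"
  shows "(\<integral>\<^sup>+\<omega>. ennreal (relu (Z \<omega>) ^ 4) \<partial>M) = ennreal (3 * \<sigma>^4 / 2)"
proof -
  have "fact (2 * 2) / ((2 / \<sigma>\<^sup>2)^2 * fact 2) / 2 = 3 * \<sigma>^4 / (2::real)"
    using assms(1) by (simp add: fact_numeral power2_eq_square field_simps eval_nat_numeral)
  then show ?thesis using relu_moment_distr[OF assms, of 2] by simp
qed

lemma (in prob_space) row_normal:
  fixes W :: "nat \<Rightarrow> nat \<Rightarrow> nat \<Rightarrow> 'a \<Rightarrow> real" and m l i :: nat and y :: "nat \<Rightarrow> real"
  assumes ind: "indep_vars (\<lambda>_. borel) (\<lambda>(k, i, j). W k i j) I"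
    and inI: "\<forall>j<m. (l, i, j) \<in> I"
    and dist: "\<forall>j<m. distributed M lborel (W l i j) std_normal_density"
    and s: "0 < (\<Sum>j<m. (y j)\<^sup>2)"
  shows "distributed M lborel (\<lambda>\<omega>. \<Sum>j<m. W l i j \<omega> * y j) (normal_density 0 (sqrt (\<Sum>j<m. (y j)\<^sup>2)))"
proof -
  define J' where "J' = {j. j < m \<and> y j \<noteq> 0}"
  define T where "T = (\<lambda>j. (l, i, j)) ` J'"
  have J'sub: "J' \<subseteq> {..<m}" unfolding J'_def by auto
  have finJ: "finite J'" using finite_subset[OF J'sub] by simp
  have nonemp: "J' \<noteq> {}"
  proof
    assume "J' = {}"
    then have "\<forall>j<m. y j = 0" unfolding J'_def by auto
    then have "(\<Sum>j<m. (y j)\<^sup>2) = 0" by simp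
    with s show False by simp
  qed
  have inj: "inj_on (\<lambda>j. (l, i, j)) J'" by (auto simp: inj_on_def)
  have red: "(\<Sum>j\<in>J'. h j) = (\<Sum>j<m. h j)" if "\<And>j. y j = 0 \<Longrightarrow> h j = 0" for h :: "nat \<Rightarrow> real"
    by (rule sum.mono_neutral_left) (use J'sub that in \<open>auto simp: J'_def\<close>)
  define X where "X t \<omega> = y (snd (snd t)) * (case t of (k, i, j) \<Rightarrow> W k i j \<omega>)" for t \<omega>
  have TI: "T \<subseteq> I" using inI J'sub unfolding T_def by auto
  have indT: "indep_vars (\<lambda>_. borel) X T"
  proof -
    have "indep_vars (\<lambda>_. borel) (\<lambda>t \<omega>. (\<lambda>v. y (snd (snd t)) * v) ((\<lambda>(k, i, j). W k i j) t \<omega>)) T"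
      by (rule indep_vars_compose2[OF indep_vars_subset[OF ind TI]]) auto
    then show ?thesis unfolding X_def by (simp add: case_prod_beta)
  qed
  have distT: "distributed M lborel (X t) (normal_density 0 \<bar>y (snd (snd t))\<bar>)" if "t \<in> T" for t
  proof -
    obtain j where j: "t = (l, i, j)" "j \<in> J'" using \<open>t \<in> T\<close> unfolding T_def by auto
    then have jm: "j < m" "y j \<noteq> 0" unfolding J'_def by auto
    have "distributed M lborel (\<lambda>x. 0 + y j * W l i j x) (normal_density (0 + y j * 0) (\<bar>y j\<bar> * 1))"
      by (rule normal_density_affine) (use dist jm in auto)
    then show ?thesis using j unfolding X_def by simp
  qed
  have "distributed M lborel (\<lambda>x. \<Sum>t\<in>T. X t x)
          (normal_density (\<Sum>t\<in>T. 0) (sqrt (\<Sum>t\<in>T. (\<bar>y (snd (snd t))\<bar>)\<^sup>2)))"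
    by (rule sum_indep_normal) (use finJ nonemp indT distT in \<open>auto simp: T_def J'_def\<close>)
  moreover have "(\<lambda>x. \<Sum>t\<in>T. X t x) = (\<lambda>\<omega>. \<Sum>j<m. W l i j \<omega> * y j)"
  proof
    fix \<omega>
    have "(\<Sum>t\<in>T. X t \<omega>) = (\<Sum>j\<in>J'. W l i j \<omega> * y j)"
      unfolding T_def by (subst sum.reindex[OF inj]) (simp add: X_def mult.commute)
    also have "\<dots> = (\<Sum>j<m. W l i j \<omega> * y j)" by (rule red) simp
    finally show "(\<Sum>t\<in>T. X t \<omega>) = (\<Sum>j<m. W l i j \<omega> * y j)" .
  qed
  moreover have "(\<Sum>t\<in>T. (\<bar>y (snd (snd t))\<bar>)\<^sup>2) = (\<Sum>j<m. (y j)\<^sup>2)"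
  proof -
    have "(\<Sum>t\<in>T. (\<bar>y (snd (snd t))\<bar>)\<^sup>2) = (\<Sum>j\<in>J'. (y j)\<^sup>2)"
      unfolding T_def by (subst sum.reindex[OF inj]) simp
    also have "\<dots> = (\<Sum>j<m. (y j)\<^sup>2)" by (rule red) simp
    finally show ?thesis .
  qed
  ultimately show ?thesis by simp
qed

lemma relu_scale: "0 \<le> c \<Longrightarrow> relu (c * z) = c * relu z"
  unfolding relu_def by (simp add: max_def mult_le_0_iff) (auto simp: mult_le_0_iff zero_le_mult_iff)

lemma sum_if_eq: "i < (p::nat) \<Longrightarrow> (\<Sum>k<p. a + (if i = k then b else 0)) = real p * a + (b::real)"
  by (simp add: sum.distrib)

lemma (in prob_space) core:
  fixes W :: "nat \<Rightarrow> nat \<Rightarrow> nat \<Rightarrow> 'a \<Rightarrow> real" and m p l :: nat and y :: "nat \<Rightarrow> real"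
  assumes ind: "indep_vars (\<lambda>_. borel) (\<lambda>(k, i, j). W k i j) I"
    and inI: "\<forall>i<p. \<forall>j<m. (l, i, j) \<in> I"
    and dist: "\<forall>i<p. \<forall>j<m. distributed M lborel (W l i j) std_normal_density"
  defines "F \<equiv> (\<lambda>\<omega>. \<Sum>i<p. (sqrt 2 * relu (1 / sqrt (real m) * (\<Sum>j<m. W l i j \<omega> * y j)))\<^sup>2)"
  shows "(\<integral>\<^sup>+\<omega>. ennreal (F \<omega>) \<partial>M) = ennreal (real p / real m * (\<Sum>j<m. (y j)\<^sup>2))"
    and "(\<integral>\<^sup>+\<omega>. ennreal ((F \<omega>)\<^sup>2) \<partial>M) = ennreal (real p * (real p + 5) / (real m)\<^sup>2 * (\<Sum>j<m. (y j)\<^sup>2)\<^sup>2)"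
proof -
  define s where "s = (\<Sum>j<m. (y j)\<^sup>2)"
  define Z where "Z i \<omega> = (\<Sum>j<m. W l i j \<omega> * y j)" for i \<omega>
  define R where "R i \<omega> = (relu (Z i \<omega>))\<^sup>2" for i \<omega>
  have s0: "0 \<le> s" unfolding s_def by (simp add: sum_nonneg)
  have "(\<integral>\<^sup>+\<omega>. ennreal (F \<omega>) \<partial>M) = ennreal (real p / real m * s)
      \<and> (\<integral>\<^sup>+\<omega>. ennreal ((F \<omega>)\<^sup>2) \<partial>M) = ennreal (real p * (real p + 5) / (real m)\<^sup>2 * s\<^sup>2)"
  proof (cases "s = 0")
    case True
    then have "\<forall>j<m. y j = 0" unfolding s_def by (simp add: sum_nonneg_eq_0_iff)
    then have "F \<omega> = 0" for \<omega> unfolding F_def by (simp add: relu_def)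
    then show ?thesis using True by simp
  next
    case False
    then have spos: "0 < s" using s0 by simp
    then have mpos: "0 < m" unfolding s_def by (cases m) auto
    have rv: "random_variable borel (W l i j)" if "i < p" "j < m" for i j
      using ind inI that unfolding indep_vars_def by fastforce
    have Zm[measurable]: "Z i \<in> borel_measurable M" if "i < p" for i
      unfolding Z_def using rv[OF that] by (intro borel_measurable_sum borel_measurable_times) auto
    have Rm[measurable]: "R i \<in> borel_measurable M" if "i < p" for i
      unfolding R_def using Zm[OF that] by measurable
    have R0: "0 \<le> R i \<omega>" for i \<omega> unfolding R_def by simp
    have Zd: "distributed M lborel (Z i) (normal_density 0 (sqrt s))" if "i < p" for i
      unfolding Z_def s_def
      by (rule row_normal[OF ind]) (use inI dist that spos in \<open>auto simp: s_def\<close>)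
    have hR: "has_bochner_integral M (R i) (s / 2)" if "i < p" for i
    proof (rule has_bochner_integral_nn_integral)
      show "(\<integral>\<^sup>+ x. ennreal (R i x) \<partial>M) = ennreal (s / 2)"
        unfolding R_def using relu_moment2[OF _ Zd[OF that]] spos by simp
    qed (use Rm[OF that] R0 s0 in auto)
    have hR2: "has_bochner_integral M (\<lambda>\<omega>. R i \<omega> * R i \<omega>) (3 * s\<^sup>2 / 2)" if "i < p" for i
    proof (rule has_bochner_integral_nn_integral)
      have "(\<integral>\<^sup>+ x. ennreal (R i x * R i x) \<partial>M) = (\<integral>\<^sup>+ x. ennreal (relu (Z i x) ^ 4) \<partial>M)"
        unfolding R_def by (simp add: power2_eq_square[symmetric] power_mult[symmetric])
      also have "\<dots> = ennreal (3 * (sqrt s)^4 / 2)"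
        using relu_moment4[OF _ Zd[OF that]] spos by simp
      also have "(sqrt s)^4 = s\<^sup>2" using s0
        by (metis (no_types, lifting) numeral_Bit0 power_add power2_eq_square real_sqrt_pow2)
      finally show "(\<integral>\<^sup>+ x. ennreal (R i x * R i x) \<partial>M) = ennreal (3 * s\<^sup>2 / 2)" .
    qed (use Rm[OF that] R0 s0 in auto)
    have indep: "indep_var borel (R i) borel (R k)" if "i < p" "k < p" "i \<noteq> k" for i k
    proof -
      define Ri where "Ri = (\<lambda>j. (l, i, j)) ` {..<m}"
      define Rk where "Rk = (\<lambda>j. (l, k, j)) ` {..<m}"
      have "indep_var (PiM Ri (\<lambda>_. borel)) (\<lambda>\<omega>. restrict (\<lambda>t. (\<lambda>(k, i, j). W k i j) t \<omega>) Ri)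
                      (PiM Rk (\<lambda>_. borel)) (\<lambda>\<omega>. restrict (\<lambda>t. (\<lambda>(k, i, j). W k i j) t \<omega>) Rk)"
        by (rule indep_var_restrict[OF ind]) (use that inI in \<open>auto simp: Ri_def Rk_def\<close>)
      then have "indep_var borel ((\<lambda>r. (relu (\<Sum>j<m. r (l, i, j) * y j))\<^sup>2) \<circ> (\<lambda>\<omega>. restrict (\<lambda>t. (\<lambda>(k, i, j). W k i j) t \<omega>) Ri))
                           borel ((\<lambda>r. (relu (\<Sum>j<m. r (l, k, j) * y j))\<^sup>2) \<circ> (\<lambda>\<omega>. restrict (\<lambda>t. (\<lambda>(k, i, j). W k i j) t \<omega>) Rk))"
      proof (rule indep_var_compose)
        have c: "(\<lambda>r. r t) \<in> borel_measurable (PiM S (\<lambda>_. (borel :: real measure)))" for t S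
          by (rule component_meas_any)
        note c[measurable]
        show "(\<lambda>r. (relu (\<Sum>j<m. r (l, i, j) * y j))\<^sup>2) \<in> borel_measurable (PiM Ri (\<lambda>_. borel))"
          by measurable
        show "(\<lambda>r. (relu (\<Sum>j<m. r (l, k, j) * y j))\<^sup>2) \<in> borel_measurable (PiM Rk (\<lambda>_. borel))"
          by measurable
      qed
      moreover have "((\<lambda>r. (relu (\<Sum>j<m. r (l, i, j) * y j))\<^sup>2) \<circ> (\<lambda>\<omega>. restrict (\<lambda>t. (\<lambda>(k, i, j). W k i j) t \<omega>) Ri)) = R i"
        unfolding R_def Z_def Ri_def by (auto intro!: ext sum.cong)
      moreover have "((\<lambda>r. (relu (\<Sum>j<m. r (l, k, j) * y j))\<^sup>2) \<circ> (\<lambda>\<omega>. restrict (\<lambda>t. (\<lambda>(k, i, j). W k i j) t \<omega>) Rk)) = R k"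
        unfolding R_def Z_def Rk_def by (auto intro!: ext sum.cong)
      ultimately show ?thesis by simp
    qed
    have hRR: "has_bochner_integral M (\<lambda>\<omega>. R i \<omega> * R k \<omega>) (s\<^sup>2 / 4 + (if i = k then 5 * s\<^sup>2 / 4 else 0))"
      if "i < p" "k < p" for i k
    proof (cases "i = k")
      case True
      have "3 * s\<^sup>2 / 2 = s\<^sup>2 / 4 + 5 * s\<^sup>2 / 4" by simp
      then show ?thesis using hR2[OF that(1)] True by simp
    next
      case False
      have ii: "integrable M (R i)" "integrable M (R k)" using hR that by (auto simp: has_bochner_integral_iff)
      have "integrable M (\<lambda>\<omega>. R i \<omega> * R k \<omega>)" by (rule indep_var_integrable[OF indep[OF that False] ii])
      moreover have "(\<integral>\<omega>. R i \<omega> * R k \<omega> \<partial>M) = (\<integral>\<omega>. R i \<omega> \<partial>M) * (\<integral>\<omega>. R k \<omega> \<partial>M)"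
        by (rule indep_var_lebesgue_integral[OF indep[OF that False] ii])
      moreover have "(\<integral>\<omega>. R i \<omega> \<partial>M) = s / 2" "(\<integral>\<omega>. R k \<omega> \<partial>M) = s / 2"
        using hR that by (auto simp: has_bochner_integral_iff)
      ultimately show ?thesis using False by (simp add: has_bochner_integral_iff power2_eq_square)
    qed
    have Feq: "F \<omega> = 2 / real m * (\<Sum>i<p. R i \<omega>)" for \<omega>
    proof -
      have "(sqrt 2 * relu (1 / sqrt (real m) * Z i \<omega>))\<^sup>2 = 2 / real m * R i \<omega>" for i
      proof -
        have "relu (1 / sqrt (real m) * Z i \<omega>) = 1 / sqrt (real m) * relu (Z i \<omega>)"
          by (rule relu_scale) simp
        then show ?thesis unfolding R_def using mpos
          by (simp only:) (simp add: power_mult_distrib power_divide)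
      qed
      then show ?thesis unfolding F_def Z_def[symmetric] by (simp add: sum_distrib_left)
    qed
    have h1: "has_bochner_integral M F (2 / real m * (\<Sum>i<p. s / 2))"
      unfolding Feq by (intro has_bochner_integral_mult_right has_bochner_integral_sum hR) auto
    have h2: "has_bochner_integral M (\<lambda>\<omega>. (F \<omega>)\<^sup>2)
       ((2 / real m)\<^sup>2 * (\<Sum>i<p. \<Sum>k<p. s\<^sup>2 / 4 + (if i = k then 5 * s\<^sup>2 / 4 else 0)))"
    proof -
      have "(F \<omega>)\<^sup>2 = (2 / real m)\<^sup>2 * (\<Sum>i<p. \<Sum>k<p. R i \<omega> * R k \<omega>)" for \<omega>
        unfolding Feq by (simp add: power_mult_distrib power2_eq_square sum_product)
      then show ?thesis
        by (simp only:) (intro has_bochner_integral_mult_right has_bochner_integral_sum hRR, auto)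
    qed
    have F0: "0 \<le> F \<omega>" for \<omega> unfolding F_def by (simp add: sum_nonneg)
    have v1: "2 / real m * (\<Sum>i<p. s / 2) = real p / real m * s" by simp
    have v2: "(2 / real m)\<^sup>2 * (\<Sum>i<p. \<Sum>k<p. s\<^sup>2 / 4 + (if i = k then 5 * s\<^sup>2 / 4 else 0))
        = real p * (real p + 5) / (real m)\<^sup>2 * s\<^sup>2"
    proof -
      have "(\<Sum>i<p. \<Sum>k<p. s\<^sup>2 / 4 + (if i = k then 5 * s\<^sup>2 / 4 else 0)) = (\<Sum>i<p. real p * (s\<^sup>2 / 4) + 5 * s\<^sup>2 / 4)"
        by (rule sum.cong) (auto simp: sum_if_eq)
      then show ?thesis by (simp add: power2_eq_square field_simps)
    qed
    show ?thesis
    proof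
      show "(\<integral>\<^sup>+\<omega>. ennreal (F \<omega>) \<partial>M) = ennreal (real p / real m * s)"
        using h1 F0 unfolding v1 by (subst nn_integral_eq_integral) (auto simp: has_bochner_integral_iff)
      show "(\<integral>\<^sup>+\<omega>. ennreal ((F \<omega>)\<^sup>2) \<partial>M) = ennreal (real p * (real p + 5) / (real m)\<^sup>2 * s\<^sup>2)"
        using h2 F0 unfolding v2 by (subst nn_integral_eq_integral) (auto simp: has_bochner_integral_iff)
    qed
  qed
  then show "(\<integral>\<^sup>+\<omega>. ennreal (F \<omega>) \<partial>M) = ennreal (real p / real m * (\<Sum>j<m. (y j)\<^sup>2))"
    and "(\<integral>\<^sup>+\<omega>. ennreal ((F \<omega>)\<^sup>2) \<partial>M) = ennreal (real p * (real p + 5) / (real m)\<^sup>2 * (\<Sum>j<m. (y j)\<^sup>2)\<^sup>2)"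
    unfolding s_def by auto
qed

lemma vnorm_sq: "(vnorm k v)\<^sup>2 = (\<Sum>i<k. (v i)\<^sup>2)"
  unfolding vnorm_def by (simp add: sum_nonneg)

theorem proposition4:
  fixes M :: "'a measure" and n :: "nat \<Rightarrow> nat" and L l :: nat
    and W :: "nat \<Rightarrow> nat \<Rightarrow> nat \<Rightarrow> 'a \<Rightarrow> real" and x :: "nat \<Rightarrow> real"
  assumes "prob_space M"
    and "\<forall>k\<le>L. n k > 0"
    and "prob_space.indep_vars M (\<lambda>_. borel) (\<lambda>(k, i, j). W k i j)
           {(k, i, j). k \<in> {1..L} \<and> i < n k \<and> j < n (k - 1)}"
    and "\<forall>k\<in>{1..L}. \<forall>i<n k. \<forall>j<n (k - 1). distributed M lborel (W k i j) std_normal_density"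
    and "l \<in> {1..L}"
  shows "(\<integral>\<omega>. (vnorm (n l) (relu_net n (\<lambda>k i j. W k i j \<omega>) x l))^2 \<partial>M)
           = real (n l) / real (n (l - 1)) *
             (\<integral>\<omega>. (vnorm (n (l - 1)) (relu_net n (\<lambda>k i j. W k i j \<omega>) x (l - 1)))^2 \<partial>M)
       \<and> (\<integral>\<omega>. (vnorm (n l) (relu_net n (\<lambda>k i j. W k i j \<omega>) x l))^4 \<partial>M)
           = real (n l) * (real (n l) + 5) / (real (n (l - 1)))^2 *
             (\<integral>\<omega>. (vnorm (n (l - 1)) (relu_net n (\<lambda>k i j. W k i j \<omega>) x (l - 1)))^4 \<partial>M)"
proof -
  interpret prob_space M by fact
  define I where "I = {(k, i, j). k \<in> {1..L} \<and> i < n k \<and> j < n (k - 1)}"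
  have ind: "indep_vars (\<lambda>_. borel) (\<lambda>(k, i, j). W k i j) I" using assms(3) unfolding I_def .
  obtain l' where l': "l = Suc l'" using assms(5) by (cases l) auto
  have lL: "l \<le> L" using assms(5) by auto
  define m where "m = n l'"
  define p where "p = n l"
  define A where "A = {(k, i, j). k \<in> {1..l'} \<and> i < n k \<and> j < n (k - 1)}"
  define B where "B = {(k, i, j). k = l \<and> i < p \<and> j < m}"
  have AI: "A \<subseteq> I" and BI: "B \<subseteq> I" and AB: "A \<inter> B = {}"
    using lL unfolding A_def B_def I_def p_def m_def l' by auto
  define GA where "GA \<omega> = restrict (\<lambda>t. (\<lambda>(k, i, j). W k i j) t \<omega>) A" for \<omega>
  define GB where "GB \<omega> = restrict (\<lambda>t. (\<lambda>(k, i, j). W k i j) t \<omega>) B" for \<omega>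
  have indAB: "indep_var (PiM A (\<lambda>_. borel)) GA (PiM B (\<lambda>_. borel)) GB"
    unfolding GA_def[abs_def] GB_def[abs_def] by (rule indep_var_restrict[OF ind AB AI BI])
  have GAm[measurable]: "GA \<in> measurable M (PiM A (\<lambda>_. borel))" using indep_var_rv1[OF indAB] .
  have GBm[measurable]: "GB \<in> measurable M (PiM B (\<lambda>_. borel))" using indep_var_rv2[OF indAB] .
  define RNa where "RNa a j = relu_net n (\<lambda>k i j. a (k, i, j)) x l' j" for a j
  define \<Phi> where "\<Phi> z = (\<Sum>i<p. (sqrt 2 * relu (1 / sqrt (real m) * (\<Sum>j<m. snd z (l, i, j) * RNa (fst z) j)))\<^sup>2)" for z
  define \<Psi> where "\<Psi> a = (\<Sum>j<m. (RNa a j)\<^sup>2)" for a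
  have RNam[measurable]: "(\<lambda>a. RNa a j) \<in> borel_measurable (PiM A (\<lambda>_. borel))" for j
    unfolding RNa_def by (rule relu_net_meas)
  have \<Psi>m[measurable]: "\<Psi> \<in> borel_measurable (PiM A (\<lambda>_. borel))" unfolding \<Psi>_def[abs_def] by measurable
  have \<Phi>m[measurable]: "\<Phi> \<in> borel_measurable (PiM A (\<lambda>_. borel) \<Otimes>\<^sub>M PiM B (\<lambda>_. borel))"
  proof -
    have c1: "(\<lambda>z. snd z t) \<in> borel_measurable (PiM A (\<lambda>_. borel) \<Otimes>\<^sub>M PiM B (\<lambda>_. (borel :: real measure)))" for t
      by (rule measurable_compose[OF measurable_snd component_meas_any])
    have c2: "(\<lambda>z. RNa (fst z) j) \<in> borel_measurable (PiM A (\<lambda>_. borel) \<Otimes>\<^sub>M PiM B (\<lambda>_. (borel :: real measure)))" for j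
      by (rule measurable_compose[OF measurable_fst RNam])
    note c1[measurable] c2[measurable]
    show ?thesis unfolding \<Phi>_def[abs_def] by measurable
  qed
  have RNeq: "RNa (GA \<omega>) j = relu_net n (\<lambda>k i j. W k i j \<omega>) x l' j" if "j < m" for \<omega> j
    unfolding RNa_def
    by (rule relu_net_agree) (use that in \<open>auto simp: GA_def A_def m_def\<close>)
  have lhs_eq: "(vnorm p (relu_net n (\<lambda>k i j. W k i j \<omega>) x l))\<^sup>2 = \<Phi> (GA \<omega>, GB \<omega>)" for \<omega>
  proof -
    have "(\<Sum>j<m. W l i j \<omega> * relu_net n (\<lambda>k i j. W k i j \<omega>) x l' j) = (\<Sum>j<m. GB \<omega> (l, i, j) * RNa (GA \<omega>) j)"
      if "i < p" for i
      by (rule sum.cong) (use that RNeq in \<open>auto simp: GB_def B_def\<close>)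
    then show ?thesis unfolding vnorm_sq \<Phi>_def
      by (intro sum.cong) (auto simp: l' m_def)
  qed
  have rhs_eq: "(vnorm m (relu_net n (\<lambda>k i j. W k i j \<omega>) x l'))\<^sup>2 = \<Psi> (GA \<omega>)" for \<omega>
    unfolding vnorm_sq \<Psi>_def by (intro sum.cong) (auto simp: RNeq)
  have inner: "(\<integral>\<^sup>+\<omega>. ennreal (\<Phi> (a, GB \<omega>)) \<partial>M) = ennreal (real p / real m * \<Psi> a)"
    and inner2: "(\<integral>\<^sup>+\<omega>. ennreal ((\<Phi> (a, GB \<omega>))\<^sup>2) \<partial>M) = ennreal (real p * (real p + 5) / (real m)\<^sup>2 * (\<Psi> a)\<^sup>2)"
    for a
  proof -
    have inI: "\<forall>i<p. \<forall>j<m. (l, i, j) \<in> I" using BI unfolding B_def by auto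
    have dist: "\<forall>i<p. \<forall>j<m. distributed M lborel (W l i j) std_normal_density"
      using assms(4) assms(5) unfolding p_def m_def l' by auto
    have eqF: "\<Phi> (a, GB \<omega>) = (\<Sum>i<p. (sqrt 2 * relu (1 / sqrt (real m) * (\<Sum>j<m. W l i j \<omega> * RNa a j)))\<^sup>2)" for \<omega>
      unfolding \<Phi>_def by (intro sum.cong arg_cong[where f="\<lambda>z. (sqrt 2 * relu (1 / sqrt (real m) * z))\<^sup>2"]) (auto simp: GB_def B_def)
    show "(\<integral>\<^sup>+\<omega>. ennreal (\<Phi> (a, GB \<omega>)) \<partial>M) = ennreal (real p / real m * \<Psi> a)"
      unfolding eqF \<Psi>_def using core(1)[OF ind inI dist, of "RNa a"] by simp
    show "(\<integral>\<^sup>+\<omega>. ennreal ((\<Phi> (a, GB \<omega>))\<^sup>2) \<partial>M) = ennreal (real p * (real p + 5) / (real m)\<^sup>2 * (\<Psi> a)\<^sup>2)"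
      unfolding eqF \<Psi>_def using core(2)[OF ind inI dist, of "RNa a"] by simp
  qed
  have comb: "(\<integral>\<omega>. g (\<Phi> (GA \<omega>, GB \<omega>)) \<partial>M) = c * (\<integral>\<omega>. h (\<Psi> (GA \<omega>)) \<partial>M)"
    if gm: "g \<in> borel_measurable borel" and hm: "h \<in> borel_measurable borel"
      and g0: "\<And>t. 0 \<le> g t" and h0: "\<And>t. 0 \<le> h t" and c0: "0 \<le> c"
      and inn: "\<And>a. (\<integral>\<^sup>+\<omega>. ennreal (g (\<Phi> (a, GB \<omega>))) \<partial>M) = ennreal (c * h (\<Psi> a))"
    for g h :: "real \<Rightarrow> real" and c :: real
  proof -
    note gm[measurable] hm[measurable]
    have "(\<integral>\<^sup>+\<omega>. ennreal (g (\<Phi> (GA \<omega>, GB \<omega>))) \<partial>M)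
        = (\<integral>\<^sup>+a. (\<integral>\<^sup>+\<omega>. ennreal (g (\<Phi> (a, GB \<omega>))) \<partial>M) \<partial>distr M (PiM A (\<lambda>_. borel)) GA)"
      by (rule indep_tonelli[OF indAB, where f="\<lambda>z. ennreal (g (\<Phi> z))"]) measurable
    also have "\<dots> = (\<integral>\<^sup>+a. ennreal (c * h (\<Psi> a)) \<partial>distr M (PiM A (\<lambda>_. borel)) GA)"
      by (simp add: inn)
    also have "\<dots> = (\<integral>\<^sup>+\<omega>. ennreal (c * h (\<Psi> (GA \<omega>))) \<partial>M)"
      by (subst nn_integral_distr) auto
    also have "\<dots> = ennreal c * (\<integral>\<^sup>+\<omega>. ennreal (h (\<Psi> (GA \<omega>))) \<partial>M)"
      using c0 h0 by (subst nn_integral_cmult[symmetric]) (auto simp: ennreal_mult)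
    finally have eq: "(\<integral>\<^sup>+\<omega>. ennreal (g (\<Phi> (GA \<omega>, GB \<omega>))) \<partial>M)
        = ennreal c * (\<integral>\<^sup>+\<omega>. ennreal (h (\<Psi> (GA \<omega>))) \<partial>M)" .
    have "(\<integral>\<omega>. g (\<Phi> (GA \<omega>, GB \<omega>)) \<partial>M) = enn2real (\<integral>\<^sup>+\<omega>. ennreal (g (\<Phi> (GA \<omega>, GB \<omega>))) \<partial>M)"
      using g0 by (subst integral_eq_nn_integral) auto
    also have "\<dots> = c * enn2real (\<integral>\<^sup>+\<omega>. ennreal (h (\<Psi> (GA \<omega>))) \<partial>M)"
      unfolding eq using c0 by (simp add: enn2real_mult)
    also have "enn2real (\<integral>\<^sup>+\<omega>. ennreal (h (\<Psi> (GA \<omega>))) \<partial>M) = (\<integral>\<omega>. h (\<Psi> (GA \<omega>)) \<partial>M)"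
      using h0 by (subst integral_eq_nn_integral) auto
    finally show ?thesis .
  qed
  have r1: "(\<integral>\<omega>. \<Phi> (GA \<omega>, GB \<omega>) \<partial>M) = real p / real m * (\<integral>\<omega>. \<Psi> (GA \<omega>) \<partial>M)"
  proof -
    have "0 \<le> \<Phi> z" for z unfolding \<Phi>_def by (simp add: sum_nonneg)
    moreover have "0 \<le> \<Psi> a" for a unfolding \<Psi>_def by (simp add: sum_nonneg)
    ultimately show ?thesis
      using comb[of "\<lambda>t. max 0 t" "\<lambda>t. max 0 t" "real p / real m"] inner
      by (simp add: max_absorb2)
  qed
  have r2: "(\<integral>\<omega>. (\<Phi> (GA \<omega>, GB \<omega>))\<^sup>2 \<partial>M) = real p * (real p + 5) / (real m)\<^sup>2 * (\<integral>\<omega>. (\<Psi> (GA \<omega>))\<^sup>2 \<partial>M)"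
    using comb[of "\<lambda>t. t\<^sup>2" "\<lambda>t. t\<^sup>2" "real p * (real p + 5) / (real m)\<^sup>2"] inner2
    by simp
  have e4: "(vnorm k v)^4 = ((vnorm k v)\<^sup>2)\<^sup>2" for k v by simp
  show ?thesis
    unfolding e4 using r1 r2 lhs_eq rhs_eq by (simp add: l' p_def m_def)
qed

end
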